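(* Let $N\ge1$, $K\ge2$ be integers with $N$ divisible by $K$, put $m=N/K$, and let $\alpha\in[0,1]$. Let $\sigma^A,\sigma^B$ be mixed strategies of $\mathcal{B}_\alpha(N,K)$ such that, for every battlefield $k$, the marginal $\sigma^A_k$ is the uniform distribution on the odd integers $\{1,3,\ldots,2m-1\}$ and the marginal $\sigma^B_k$ is the uniform distribution on the even integers $\{0,2,\ldots,2m\}$. Then $(\sigma^A,\sigma^B)$ is a Nash equilibrium of $\mathcal{B}_\alpha(N,K)$, and each player's expected payoff equals $K/2$.
   Context: Fix integers $N\ge1$, $K\ge2$ and a real number $\alpha$. The Colonel Blotto game $\mathcal{B}_\alpha(N,K)$ is the two-player simultaneous-move game with players $A,B$, each with pure strategy set $S=\{s\in\{0,1,\ldots,N\}^K:\sum_{k=1}^K s_k=N\}$, in which the payoff of player $i$ at the pure profile $(s^i,s^{-i})$ is $\pi^i(s^i,s^{-i})=\sum_{k=1}^K\big(\mathbf 1[s^i_k>s^{-i}_k]+\tfrac{\alpha}{2}\mathbf 1[s^i_k=s^{-i}_k]\big)$. Mixed strategies are probability distributions on $S$, with expected payoffs under independent randomization; a Nash equilibrium is a mixed profile from which no unilateral deviation raises a player's expected payoff. For a mixed strategy $\sigma$ and battlefield $k$, the marginal $\sigma_k$ is the distribution of $s_k$ when $s\sim\sigma$. *)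

theory Defs
  imports "HOL-Probability.Probability"
begin

definition blotto_S :: "nat \<Rightarrow> nat \<Rightarrow> nat list set" where
  "blotto_S N K = {s. length s = K \<and> sum_list s = N}"

definition blotto_payoff :: "real \<Rightarrow> nat \<Rightarrow> nat list \<Rightarrow> nat list \<Rightarrow> real" where
  "blotto_payoff \<alpha> K s t =
     (\<Sum>k<K. (if s ! k > t ! k then 1 else 0) + (\<alpha> / 2) * (if s ! k = t ! k then 1 else 0))"

definition mixed_strategy :: "nat \<Rightarrow> nat \<Rightarrow> nat list pmf \<Rightarrow> bool" where
  "mixed_strategy N K \<sigma> \<longleftrightarrow> set_pmf \<sigma> \<subseteq> blotto_S N K"

definition payoff_A :: "real \<Rightarrow> nat \<Rightarrow> nat list pmf \<Rightarrow> nat list pmf \<Rightarrow> real" where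
  "payoff_A \<alpha> K \<sigma>A \<sigma>B =
     measure_pmf.expectation (pair_pmf \<sigma>A \<sigma>B) (\<lambda>(s, t). blotto_payoff \<alpha> K s t)"

definition payoff_B :: "real \<Rightarrow> nat \<Rightarrow> nat list pmf \<Rightarrow> nat list pmf \<Rightarrow> real" where
  "payoff_B \<alpha> K \<sigma>A \<sigma>B =
     measure_pmf.expectation (pair_pmf \<sigma>A \<sigma>B) (\<lambda>(s, t). blotto_payoff \<alpha> K t s)"

definition nash_equilibrium :: "real \<Rightarrow> nat \<Rightarrow> nat \<Rightarrow> nat list pmf \<Rightarrow> nat list pmf \<Rightarrow> bool" where
  "nash_equilibrium \<alpha> N K \<sigma>A \<sigma>B \<longleftrightarrow>
     mixed_strategy N K \<sigma>A \<and> mixed_strategy N K \<sigma>B \<and>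
     (\<forall>\<tau>. mixed_strategy N K \<tau> \<longrightarrow> payoff_A \<alpha> K \<tau> \<sigma>B \<le> payoff_A \<alpha> K \<sigma>A \<sigma>B) \<and>
     (\<forall>\<tau>. mixed_strategy N K \<tau> \<longrightarrow> payoff_B \<alpha> K \<sigma>A \<tau> \<le> payoff_B \<alpha> K \<sigma>A \<sigma>B)"

definition marginal :: "nat list pmf \<Rightarrow> nat \<Rightarrow> nat pmf" where
  "marginal \<sigma> k = map_pmf (\<lambda>s. s ! k) \<sigma>"

end

theory Submission imports Defs begin

definition gg :: "real \<Rightarrow> nat \<Rightarrow> nat \<Rightarrow> real" where
  "gg \<alpha> x y = (if x > y then 1 else 0) + (\<alpha> / 2) * (if x = y then 1 else 0)"

lemma sum_gg: "finite A \<Longrightarrow> (\<Sum>i\<in>A. gg \<alpha> x (f i)) =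
   real (card {i\<in>A. f i < x}) + \<alpha>/2 * real (card {i\<in>A. f i = x})"
proof -
  have c: "(\<Sum>i\<in>A. (if P i then 1 else 0)::real) = real (card {i\<in>A. P i})" if "finite A" for P :: "'a \<Rightarrow> bool"
    using that by (simp add: sum.inter_filter[symmetric])
  assume "finite A"
  have "(\<Sum>i\<in>A. gg \<alpha> x (f i)) = (\<Sum>i\<in>A. (if f i < x then 1 else 0)) + \<alpha>/2 * (\<Sum>i\<in>A. (if f i = x then 1 else 0))"
    unfolding gg_def sum.distrib sum_distrib_left by (simp add: eq_commute)
  also have "\<dots> = real (card {i\<in>A. f i < x}) + \<alpha>/2 * real (card {i\<in>A. f i = x})"
    using c[OF \<open>finite A\<close>] by simp
  finally show ?thesis .
qed

lemma aux_div: "(X::real) \<le> Y/2 \<Longrightarrow> 0 < d \<Longrightarrow> X/d \<le> Y/(2*d)"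
proof -
  assume "X \<le> Y/2" "0 < d"
  then have "X/d \<le> (Y/2)/d" by (intro divide_right_mono) auto
  then show ?thesis by simp
qed

lemma even_set: "{j::nat. even j \<and> j \<le> 2 * m} = (\<lambda>i. 2*i) ` {..m}"
  by (auto elim!: evenE)

lemma odd_set: "{j::nat. odd j \<and> j < 2 * m} = (\<lambda>i. 2*i+1) ` {..<m}"
  by (auto elim!: oddE)

lemma unifB:
  assumes "0 \<le> \<alpha>" "\<alpha> \<le> 1"
  shows "measure_pmf.expectation (pmf_of_set {j. even j \<and> j \<le> 2 * m}) (gg \<alpha> x)
           \<le> (real x + 1) / (2 * (real m + 1))"
    and "odd x \<Longrightarrow> x < 2*m \<Longrightarrow> measure_pmf.expectation (pmf_of_set {j. even j \<and> j \<le> 2 * m}) (gg \<alpha> x)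
           = (real x + 1) / (2 * (real m + 1))"
proof -
  have inj: "inj_on (\<lambda>i::nat. 2*i) {..m}" by (auto simp: inj_on_def)
  have E: "measure_pmf.expectation (pmf_of_set {j. even j \<and> j \<le> 2 * m}) (gg \<alpha> x)
     = (real (card {i\<in>{..m}. 2*i < x}) + \<alpha>/2 * real (card {i\<in>{..m}. 2*i = x})) / (real m + 1)"
    unfolding even_set
    apply (subst integral_pmf_of_set)
      apply auto[2]
    apply (subst sum.reindex[OF inj])
    apply (subst card_image[OF inj])
    apply (simp add: sum_gg)
    done
  have pos: "(0::real) < real m + 1" by simp
  show "measure_pmf.expectation (pmf_of_set {j. even j \<and> j \<le> 2 * m}) (gg \<alpha> x)
           \<le> (real x + 1) / (2 * (real m + 1))"
  proof (cases "even x")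
    case True
    then obtain a where a: "x = 2*a" by (auto elim: evenE)
    have c1: "{i\<in>{..m}. 2*i < x} = {..<min a (Suc m)}" using a by auto
    have c2: "{i\<in>{..m}. 2*i = x} \<subseteq> {a}" using a by auto
    have "card {i\<in>{..m}. 2*i = x} \<le> 1" using card_mono[OF _ c2] by simp
    hence "real (card {i\<in>{..m}. 2*i = x}) \<le> 1" by linarith
    hence "\<alpha>/2 * real (card {i\<in>{..m}. 2*i = x}) \<le> 1/2" using assms
      by (intro order.trans[OF mult_mono[of "\<alpha>/2" "1/2" _ 1]]) auto
    moreover have "real (card {i\<in>{..m}. 2*i < x}) \<le> real a" unfolding c1 by simp
    ultimately have "real (card {i\<in>{..m}. 2*i < x}) + \<alpha>/2 * real (card {i\<in>{..m}. 2*i = x}) \<le> (real x + 1)/2"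
      using a by simp
    then show ?thesis unfolding E by (rule aux_div) (use pos in auto)
  next
    case False
    then obtain a where a: "x = 2*a+1" by (auto elim: oddE)
    have c1: "{i\<in>{..m}. 2*i < x} = {..min a m}" using a by auto
    have c2: "{i\<in>{..m}. 2*i = x} = {}" using a by (auto; presburger)
    have "real (card {i\<in>{..m}. 2*i < x}) \<le> real a + 1" unfolding c1 by simp
    then have "real (card {i\<in>{..m}. 2*i < x}) + \<alpha>/2 * real (card ({}::nat set)) \<le> (real x + 1)/2" using a by simp
    then show ?thesis unfolding E c2 by (rule aux_div) (use pos in auto)
  qed
  assume "odd x" "x < 2*m"
  then obtain a where a: "x = 2*a+1" "a < m" by (auto elim: oddE)
  have c1: "{i\<in>{..m}. 2*i < x} = {..a}" using a by auto
  have c2: "{i\<in>{..m}. 2*i = x} = {}" using a by (auto; presburger)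
  show "measure_pmf.expectation (pmf_of_set {j. even j \<and> j \<le> 2 * m}) (gg \<alpha> x)
           = (real x + 1) / (2 * (real m + 1))"
    unfolding E c1 c2 using pos a by (simp add: field_simps)
qed

lemma unifA:
  assumes "0 \<le> \<alpha>" "\<alpha> \<le> 1" "m \<ge> 1"
  shows "measure_pmf.expectation (pmf_of_set {j. odd j \<and> j < 2 * m}) (gg \<alpha> x)
           \<le> real x / (2 * real m)"
    and "even x \<Longrightarrow> x \<le> 2*m \<Longrightarrow> measure_pmf.expectation (pmf_of_set {j. odd j \<and> j < 2 * m}) (gg \<alpha> x)
           = real x / (2 * real m)"
proof -
  have inj: "inj_on (\<lambda>i::nat. 2*i+1) {..<m}" by (auto simp: inj_on_def)
  have ne: "{..<m} \<noteq> {}" using assms by (metis emptyE lessThan_iff less_le_trans zero_less_one)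
  have E: "measure_pmf.expectation (pmf_of_set {j. odd j \<and> j < 2 * m}) (gg \<alpha> x)
     = (real (card {i\<in>{..<m}. 2*i+1 < x}) + \<alpha>/2 * real (card {i\<in>{..<m}. 2*i+1 = x})) / real m"
    unfolding odd_set
    apply (subst integral_pmf_of_set)
      using ne apply auto[2]
    apply (subst sum.reindex[OF inj])
    apply (subst card_image[OF inj])
    apply (simp add: sum_gg)
    done
  have pos: "(0::real) < real m" using assms by simp
  show "measure_pmf.expectation (pmf_of_set {j. odd j \<and> j < 2 * m}) (gg \<alpha> x)
           \<le> real x / (2 * real m)"
  proof (cases "even x")
    case True
    then obtain a where a: "x = 2*a" by (auto elim: evenE)
    have c1: "{i\<in>{..<m}. 2*i+1 < x} = {..<min a m}" using a by auto
    have c2: "{i\<in>{..<m}. 2*i+1 = x} = {}" using a by (auto; presburger)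
    have "real (card {i\<in>{..<m}. 2*i+1 < x}) \<le> real a" unfolding c1 by simp
    then show ?thesis unfolding E c2 using pos a by (simp add: field_simps)
  next
    case False
    then obtain a where a: "x = 2*a+1" by (auto elim: oddE)
    have c1: "{i\<in>{..<m}. 2*i+1 < x} = {..<min a m}" using a by auto
    have c2: "{i\<in>{..<m}. 2*i+1 = x} \<subseteq> {a}" using a by auto
    have "card {i\<in>{..<m}. 2*i+1 = x} \<le> 1" using card_mono[OF _ c2] by simp
    hence "real (card {i\<in>{..<m}. 2*i+1 = x}) \<le> 1" by linarith
    hence "\<alpha>/2 * real (card {i\<in>{..<m}. 2*i+1 = x}) \<le> 1/2" using assms
      by (intro order.trans[OF mult_mono[of "\<alpha>/2" "1/2" _ 1]]) auto
    moreover have "real (card {i\<in>{..<m}. 2*i+1 < x}) \<le> real a" unfolding c1 by simp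
    ultimately have "real (card {i\<in>{..<m}. 2*i+1 < x}) + \<alpha>/2 * real (card {i\<in>{..<m}. 2*i+1 = x}) \<le> real x/2"
      using a by simp
    then show ?thesis unfolding E by (rule aux_div) (use pos in auto)
  qed
  assume "even x" "x \<le> 2*m"
  then obtain a where a: "x = 2*a" "a \<le> m" by (auto elim: evenE)
  have c1: "{i\<in>{..<m}. 2*i+1 < x} = {..<a}" using a by auto
  have c2: "{i\<in>{..<m}. 2*i+1 = x} = {}" using a by (auto; presburger)
  show "measure_pmf.expectation (pmf_of_set {j. odd j \<and> j < 2 * m}) (gg \<alpha> x)
           = real x / (2 * real m)"
    unfolding E c1 c2 using pos a by (simp add: field_simps)
qed


lemma finite_S: "finite (blotto_S N K)"
proof -
  have "blotto_S N K \<subseteq> {xs. set xs \<subseteq> {0..N} \<and> length xs = K}"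
    unfolding blotto_S_def using member_le_sum_list by fastforce
  then show ?thesis by (rule finite_subset) (rule finite_lists_length_eq, simp)
qed

lemma finite_supp: "mixed_strategy N K \<sigma> \<Longrightarrow> finite (set_pmf \<sigma>)"
  unfolding mixed_strategy_def using finite_S finite_subset by blast

lemma exp_pair1:
  fixes f :: "'a \<times> 'b \<Rightarrow> real"
  assumes "finite (set_pmf p)" "finite (set_pmf q)"
  shows "measure_pmf.expectation (pair_pmf p q) f
       = measure_pmf.expectation p (\<lambda>s. measure_pmf.expectation q (\<lambda>t. f (s, t)))"
proof -
  have "measure_pmf.expectation (pair_pmf p q) f = (\<Sum>a\<in>set_pmf p \<times> set_pmf q. f a * pmf (pair_pmf p q) a)"
    by (rule integral_measure_pmf_real) (use assms in auto)
  also have "\<dots> = (\<Sum>s\<in>set_pmf p. \<Sum>t\<in>set_pmf q. f (s,t) * (pmf p s * pmf q t))"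
    by (simp add: sum.cartesian_product case_prod_beta, intro sum.cong refl) (metis pmf_pair prod.collapse)
  also have "\<dots> = (\<Sum>s\<in>set_pmf p. (\<Sum>t\<in>set_pmf q. f (s,t) * pmf q t) * pmf p s)"
    by (simp add: sum_distrib_left sum_distrib_right mult_ac)
  also have "\<dots> = (\<Sum>s\<in>set_pmf p. measure_pmf.expectation q (\<lambda>t. f (s, t)) * pmf p s)"
    by (intro sum.cong refl arg_cong2[where f="(*)"] integral_measure_pmf_real[symmetric]) (use assms in auto)
  also have "\<dots> = measure_pmf.expectation p (\<lambda>s. measure_pmf.expectation q (\<lambda>t. f (s, t)))"
    by (rule integral_measure_pmf_real[symmetric]) (use assms in auto)
  finally show ?thesis .
qed

lemma exp_pair2:
  fixes f :: "'a \<times> 'b \<Rightarrow> real"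
  assumes "finite (set_pmf p)" "finite (set_pmf q)"
  shows "measure_pmf.expectation (pair_pmf p q) f
       = measure_pmf.expectation q (\<lambda>t. measure_pmf.expectation p (\<lambda>s. f (s, t)))"
proof -
  have "measure_pmf.expectation (pair_pmf p q) f
      = measure_pmf.expectation (pair_pmf q p) (\<lambda>(t, s). f (s, t))"
    by (subst pair_commute_pmf) (simp add: case_prod_beta)
  also have "\<dots> = measure_pmf.expectation q (\<lambda>t. measure_pmf.expectation p (\<lambda>s. f (s, t)))"
    by (subst exp_pair1) (use assms in auto)
  finally show ?thesis .
qed

lemma payoff_sum: "blotto_payoff \<alpha> K s t = (\<Sum>k<K. gg \<alpha> (s!k) (t!k))"
  unfolding blotto_payoff_def gg_def by simp

lemma exp_inner:
  assumes "finite (set_pmf q)"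
  shows "measure_pmf.expectation q (\<lambda>t. blotto_payoff \<alpha> K s t)
       = (\<Sum>k<K. measure_pmf.expectation (marginal q k) (gg \<alpha> (s!k)))"
  unfolding payoff_sum marginal_def
  by (subst Bochner_Integration.integral_sum) (auto intro: integrable_measure_pmf_finite[OF assms])

lemma payoffA_eq:
  assumes "finite (set_pmf p)" "finite (set_pmf q)"
  shows "payoff_A \<alpha> K p q = measure_pmf.expectation p
           (\<lambda>s. \<Sum>k<K. measure_pmf.expectation (marginal q k) (gg \<alpha> (s!k)))"
  unfolding payoff_A_def
  by (subst exp_pair1[OF assms]) (simp add: exp_inner[OF assms(2)])

lemma payoffB_eq:
  assumes "finite (set_pmf p)" "finite (set_pmf q)"
  shows "payoff_B \<alpha> K p q = measure_pmf.expectation q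
           (\<lambda>t. \<Sum>k<K. measure_pmf.expectation (marginal p k) (gg \<alpha> (t!k)))"
  unfolding payoff_B_def
  by (subst exp_pair2[OF assms]) (simp add: exp_inner[OF assms(1)])

lemma exp_le:
  fixes F :: "'a \<Rightarrow> real"
  assumes "finite (set_pmf p)" "\<And>x. x \<in> set_pmf p \<Longrightarrow> F x \<le> c"
  shows "measure_pmf.expectation p F \<le> c"
  by (rule measure_pmf.integral_le_const)
     (auto intro: integrable_measure_pmf_finite[OF assms(1)] simp: AE_measure_pmf_iff assms(2))

lemma exp_eq:
  fixes F :: "'a \<Rightarrow> real"
  assumes "\<And>x. x \<in> set_pmf p \<Longrightarrow> F x = c"
  shows "measure_pmf.expectation p F = c"
proof -
  have "measure_pmf.expectation p F = measure_pmf.expectation p (\<lambda>_. c)"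
    by (rule integral_cong_AE) (auto simp: AE_measure_pmf_iff assms)
  then show ?thesis by simp
qed

lemma sum_nth_S: "s \<in> blotto_S N K \<Longrightarrow> (\<Sum>k<K. real (s!k)) = real N"
  unfolding blotto_S_def by (auto simp: sum_list_sum_nth atLeast0LessThan simp flip: of_nat_sum)


theorem mainTheorem12:
  fixes N K m :: nat and \<alpha> :: real and \<sigma>A \<sigma>B :: "nat list pmf"
  assumes "N \<ge> 1" and "K \<ge> 2" and "K dvd N" and "m = N div K"
    and "0 \<le> \<alpha>" and "\<alpha> \<le> 1"
    and "mixed_strategy N K \<sigma>A" and "mixed_strategy N K \<sigma>B"
    and "\<And>k. k < K \<Longrightarrow> marginal \<sigma>A k = pmf_of_set {j. odd j \<and> j < 2 * m}"
    and "\<And>k. k < K \<Longrightarrow> marginal \<sigma>B k = pmf_of_set {j. even j \<and> j \<le> 2 * m}"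
  shows "nash_equilibrium \<alpha> N K \<sigma>A \<sigma>B
         \<and> payoff_A \<alpha> K \<sigma>A \<sigma>B = real K / 2
         \<and> payoff_B \<alpha> K \<sigma>A \<sigma>B = real K / 2"
proof -
  note a0 = assms(5) and a1 = assms(6)
  have Nm: "N = K * m" using assms(3,4) by simp
  have m1: "m \<ge> 1" using Nm assms(1) by (cases m) auto
  have Km: "real N = real K * real m" using Nm by simp
  have fA: "finite (set_pmf \<sigma>A)" and fB: "finite (set_pmf \<sigma>B)"
    using finite_supp assms(7,8) by blast+
  have SA: "s \<in> blotto_S N K" if "s \<in> set_pmf \<sigma>A" for s
    using assms(7) that unfolding mixed_strategy_def by blast
  have SB: "s \<in> blotto_S N K" if "s \<in> set_pmf \<sigma>B" for s
    using assms(8) that unfolding mixed_strategy_def by blast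
  have finodd: "finite {j::nat. odd j \<and> j < 2 * m}" by simp
  have neodd: "{j::nat. odd j \<and> j < 2 * m} \<noteq> {}"
  proof -
    have "1 \<in> {j::nat. odd j \<and> j < 2 * m}" using m1 by simp
    then show ?thesis by blast
  qed
  have fineven: "finite {j::nat. even j \<and> j \<le> 2 * m}" by simp
  have neeven: "{j::nat. even j \<and> j \<le> 2 * m} \<noteq> {}"
  proof -
    have "0 \<in> {j::nat. even j \<and> j \<le> 2 * m}" by simp
    then show ?thesis by blast
  qed
  have oddA: "odd (s!k) \<and> s!k < 2*m" if "s \<in> set_pmf \<sigma>A" "k < K" for s k
  proof -
    have "s!k \<in> set_pmf (marginal \<sigma>A k)" unfolding marginal_def using that by simp
    then show ?thesis using assms(9)[OF that(2)] finodd neodd by simp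
  qed
  have evenB: "even (s!k) \<and> s!k \<le> 2*m" if "s \<in> set_pmf \<sigma>B" "k < K" for s k
  proof -
    have "s!k \<in> set_pmf (marginal \<sigma>B k)" unfolding marginal_def using that by simp
    then show ?thesis using assms(10)[OF that(2)] fineven neeven by simp
  qed
  have pm: "(0::real) < real m + 1" by simp
  have pm2: "(0::real) < real m" using m1 by simp
  define FA where "FA s = (\<Sum>k<K. measure_pmf.expectation (marginal \<sigma>B k) (gg \<alpha> (s!k)))" for s
  define FB where "FB t = (\<Sum>k<K. measure_pmf.expectation (marginal \<sigma>A k) (gg \<alpha> (t!k)))" for t
  have FA_le: "FA s \<le> real K / 2" if "s \<in> blotto_S N K" for s
  proof -
    have "FA s \<le> (\<Sum>k<K. (real (s!k) + 1) / (2 * (real m + 1)))"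
      unfolding FA_def by (intro sum_mono) (metis assms(10) lessThan_iff unifB(1)[OF a0 a1])
    also have "\<dots> = ((\<Sum>k<K. real (s!k)) + real K) / (2 * (real m + 1))"
      by (simp add: sum_divide_distrib[symmetric] sum.distrib)
    also have "\<dots> = real K / 2" using pm by (simp add: sum_nth_S[OF that] Km field_simps)
    finally show ?thesis .
  qed
  have FA_eq: "FA s = real K / 2" if "s \<in> set_pmf \<sigma>A" for s
  proof -
    have "FA s = (\<Sum>k<K. (real (s!k) + 1) / (2 * (real m + 1)))"
      unfolding FA_def by (intro sum.cong refl) (metis oddA[OF that] assms(10) lessThan_iff unifB(2)[OF a0 a1])
    also have "\<dots> = ((\<Sum>k<K. real (s!k)) + real K) / (2 * (real m + 1))"
      by (simp add: sum_divide_distrib[symmetric] sum.distrib)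
    also have "\<dots> = real K / 2" using pm by (simp add: sum_nth_S[OF SA[OF that]] Km field_simps)
    finally show ?thesis .
  qed
  have FB_le: "FB t \<le> real K / 2" if "t \<in> blotto_S N K" for t
  proof -
    have "FB t \<le> (\<Sum>k<K. real (t!k) / (2 * real m))"
      unfolding FB_def by (intro sum_mono) (metis assms(9) lessThan_iff unifA(1)[OF a0 a1 m1])
    also have "\<dots> = (\<Sum>k<K. real (t!k)) / (2 * real m)"
      by (simp add: sum_divide_distrib[symmetric])
    also have "\<dots> = real K / 2" using pm2 by (simp add: sum_nth_S[OF that] Km field_simps)
    finally show ?thesis .
  qed
  have FB_eq: "FB t = real K / 2" if "t \<in> set_pmf \<sigma>B" for t
  proof -
    have "FB t = (\<Sum>k<K. real (t!k) / (2 * real m))"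
      unfolding FB_def by (intro sum.cong refl) (metis evenB[OF that] assms(9) lessThan_iff unifA(2)[OF a0 a1 m1])
    also have "\<dots> = (\<Sum>k<K. real (t!k)) / (2 * real m)"
      by (simp add: sum_divide_distrib[symmetric])
    also have "\<dots> = real K / 2" using pm2 by (simp add: sum_nth_S[OF SB[OF that]] Km field_simps)
    finally show ?thesis .
  qed
  have PA: "payoff_A \<alpha> K \<sigma>A \<sigma>B = real K / 2"
    unfolding payoffA_eq[OF fA fB] FA_def[symmetric] by (rule exp_eq) (rule FA_eq)
  have PB: "payoff_B \<alpha> K \<sigma>A \<sigma>B = real K / 2"
    unfolding payoffB_eq[OF fA fB] FB_def[symmetric] by (rule exp_eq) (rule FB_eq)
  have devA: "payoff_A \<alpha> K \<tau> \<sigma>B \<le> payoff_A \<alpha> K \<sigma>A \<sigma>B" if "mixed_strategy N K \<tau>" for \<tau>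
  proof -
    have ft: "finite (set_pmf \<tau>)" using finite_supp that by blast
    show ?thesis unfolding PA payoffA_eq[OF ft fB] FA_def[symmetric]
      by (rule exp_le[OF ft]) (use that FA_le in \<open>auto simp: mixed_strategy_def\<close>)
  qed
  have devB: "payoff_B \<alpha> K \<sigma>A \<tau> \<le> payoff_B \<alpha> K \<sigma>A \<sigma>B" if "mixed_strategy N K \<tau>" for \<tau>
  proof -
    have ft: "finite (set_pmf \<tau>)" using finite_supp that by blast
    show ?thesis unfolding PB payoffB_eq[OF fA ft] FB_def[symmetric]
      by (rule exp_le[OF ft]) (use that FB_le in \<open>auto simp: mixed_strategy_def\<close>)
  qed
  show ?thesis unfolding nash_equilibrium_def using assms(7,8) devA devB PA PB by blast
qed

end
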